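(* Let $\alpha,\beta,\gamma,x$ be real numbers and $\lambda$ a nonnegative integer. For all nonnegative integers $n$, $$A_{n}^{\lambda,x}(\alpha,\beta,\gamma)=(-1)^{n}\sum_{k=0}^{n}\binom{k+\lambda-1}{k}(-\beta)^{k}k!\,S(n,k,\alpha,\beta,\beta\lambda-\gamma)\,(x+1)^{k}.$$
   Context: For a number $t$ and $\alpha$, the generalised factorial is $(t|\alpha)_n=\prod_{j=0}^{n-1}(t-j\alpha)$ for $n\ge 1$ and $(t|\alpha)_0=1$. For parameters $\alpha,\beta,\gamma$, the generalised Stirling numbers $S(n,k,\alpha,\beta,\gamma)$ ($0\le k\le n$) are defined by the polynomial identity $(t|\alpha)_n=\sum_{k=0}^{n}S(n,k,\alpha,\beta,\gamma)\,(t-\gamma|\beta)_k$ in the variable $t$. For a nonnegative integer $\lambda$ put $\binom{k+\lambda-1}{k}=\lambda(\lambda+1)\cdots(\lambda+k-1)/k!$ (equal to $1$ for $k=0$). Define $$A^{\lambda,x}_n(\alpha,\beta,\gamma)=\sum_{k=0}^{n}\binom{k+\lambda-1}{k}(-1)^{n+k}\beta^k k!\,S(n,k,\alpha,-\beta,-\gamma)\,x^k .$$ *)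

theory Defs
  imports Complex_Main
begin

text \<open>Generalised factorial (t|alpha)_n = prod_{j=0}^{n-1} (t - j alpha); empty product is 1.\<close>
definition gfact :: "real \<Rightarrow> real \<Rightarrow> nat \<Rightarrow> real" where
  "gfact t \<alpha> n = (\<Prod>j<n. t - real j * \<alpha>)"

definition gstirling :: "nat \<Rightarrow> nat \<Rightarrow> real \<Rightarrow> real \<Rightarrow> real \<Rightarrow> real" where
  "gstirling n k \<alpha> \<beta> \<gamma> =
     (THE s :: nat \<Rightarrow> real. (\<forall>j>n. s j = 0) \<and>
        (\<forall>t. gfact t \<alpha> n = (\<Sum>j=0..n. s j * gfact (t - \<gamma>) \<beta> j))) k"

text \<open>binom(k+lambda-1, k) = lambda(lambda+1)...(lambda+k-1)/k!\<close>
definition negbin :: "nat \<Rightarrow> nat \<Rightarrow> real" where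
  "negbin lam k = pochhammer (real lam) k / fact k"

definition Apoly :: "nat \<Rightarrow> real \<Rightarrow> nat \<Rightarrow> real \<Rightarrow> real \<Rightarrow> real \<Rightarrow> real" where
  "Apoly lam x n \<alpha> \<beta> \<gamma> =
     (\<Sum>k=0..n. negbin lam k * (-1) ^ (n + k) * \<beta> ^ k * fact k
                 * gstirling n k \<alpha> (-\<beta>) (-\<gamma>) * x ^ k)"

end

theory Submission
  imports Defs "HOL-Computational_Algebra.Polynomial"
begin

lemma gfact_0[simp]: "gfact t a 0 = 1" by (simp add: gfact_def)

lemma gfact_Suc: "gfact t a (Suc n) = gfact t a n * (t - real n * a)"
  by (simp add: gfact_def)

lemma gfact_add: "gfact t a (k + m) = gfact t a k * gfact (t - real k * a) a m"
proof (induction m)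
  case 0 then show ?case by simp
next
  case (Suc m)
  then show ?case by (simp add: gfact_Suc algebra_simps)
qed

lemma gfact_Suc_front: "gfact t a (Suc n) = t * gfact (t - a) a n"
  using gfact_add[of t a 1 n] by (simp add: gfact_def)

lemma gfact_neg: "gfact (-x) (-b) m = (-1)^m * gfact x b m"
  by (induction m) (auto simp: gfact_Suc algebra_simps)

lemma gfact_neg2: "gfact (-x) b m = (-1)^m * gfact x (-b) m"
  using gfact_neg[of x "-b" m] by simp

lemma poch_gfact: "\<beta> ^ k * pochhammer (real lam) k = gfact (\<beta> * real lam) (-\<beta>) k"
  by (induction k) (auto simp: gfact_Suc pochhammer_Suc algebra_simps)

lemma gfact_expand:
  "gfact (u + c) (-\<beta>) m =
     (\<Sum>k\<le>m. real (m choose k) * gfact (c + real k * \<beta>) (-\<beta>) (m - k) * gfact u \<beta> k)"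
proof (induction m arbitrary: c)
  case 0 then show ?case by simp
next
  case (Suc m)
  define f where "f k = real (m choose k) * gfact (c + \<beta> + real k * \<beta>) (-\<beta>) (m - k)" for k
  have "gfact (u + c) (-\<beta>) (Suc m) = (u + c) * gfact (u + (c + \<beta>)) (-\<beta>) m"
    by (simp add: gfact_Suc_front algebra_simps)
  also have "\<dots> = (\<Sum>k\<le>m. f k * (gfact u \<beta> k * u) + f k * (c * gfact u \<beta> k))"
    unfolding Suc f_def by (simp add: sum_distrib_left algebra_simps)
  also have "\<dots> = (\<Sum>k\<le>m. f k * gfact u \<beta> (Suc k)) + (\<Sum>k\<le>m. f k * (c + real k * \<beta>) * gfact u \<beta> k)"
    unfolding sum.distrib[symmetric] by (rule sum.cong) (simp_all add: gfact_Suc algebra_simps)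
  also have "(\<Sum>k\<le>m. f k * gfact u \<beta> (Suc k)) =
      (\<Sum>k\<le>Suc m. real (m choose (k - 1)) * (if k = 0 then 0 else 1) * gfact (c + real k * \<beta>) (-\<beta>) (Suc m - k) * gfact u \<beta> k)"
    by (subst sum.atMost_Suc_shift) (simp add: f_def algebra_simps)
  also have "(\<Sum>k\<le>m. f k * (c + real k * \<beta>) * gfact u \<beta> k) =
      (\<Sum>k\<le>Suc m. real (m choose k) * gfact (c + real k * \<beta>) (-\<beta>) (Suc m - k) * gfact u \<beta> k)"
  proof -
    have "f k * (c + real k * \<beta>) = real (m choose k) * gfact (c + real k * \<beta>) (-\<beta>) (Suc m - k)"
      if "k \<le> m" for k
      using that by (simp add: f_def Suc_diff_le gfact_Suc_front algebra_simps)
    then show ?thesis by (simp add: sum.atMost_Suc)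
  qed
  also have "(\<Sum>k\<le>Suc m. real (m choose (k - 1)) * (if k = 0 then 0 else 1) * gfact (c + real k * \<beta>) (-\<beta>) (Suc m - k) * gfact u \<beta> k)
      + (\<Sum>k\<le>Suc m. real (m choose k) * gfact (c + real k * \<beta>) (-\<beta>) (Suc m - k) * gfact u \<beta> k)
      = (\<Sum>k\<le>Suc m. real (Suc m choose k) * gfact (c + real k * \<beta>) (-\<beta>) (Suc m - k) * gfact u \<beta> k)"
    unfolding sum.distrib[symmetric]
  proof (rule sum.cong)
    fix k assume "k \<in> {..Suc m}"
    show "real (m choose (k - 1)) * (if k = 0 then 0 else 1) * gfact (c + real k * \<beta>) (-\<beta>) (Suc m - k) * gfact u \<beta> k
      + real (m choose k) * gfact (c + real k * \<beta>) (-\<beta>) (Suc m - k) * gfact u \<beta> k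
      = real (Suc m choose k) * gfact (c + real k * \<beta>) (-\<beta>) (Suc m - k) * gfact u \<beta> k"
    proof (cases k)
      case 0 then show ?thesis by simp
    next
      case (Suc j) then show ?thesis by (simp add: algebra_simps)
    qed
  qed simp
  finally show ?case .
qed

lemma gst_exists:
  "\<exists>s :: nat \<Rightarrow> real. (\<forall>j>n. s j = 0) \<and>
     (\<forall>t. gfact t \<alpha> n = (\<Sum>j\<le>n. s j * gfact (t - \<gamma>) \<beta> j))"
proof (induction n)
  case 0
  show ?case by (rule exI[of _ "\<lambda>j. if j = 0 then 1 else 0"]) simp
next
  case (Suc n)
  then obtain s where s0: "\<forall>j>n. s j = (0::real)"
    and s: "\<forall>t. gfact t \<alpha> n = (\<Sum>j\<le>n. s j * gfact (t - \<gamma>) \<beta> j)" by blast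
  define s' where "s' j = (if j = 0 then 0 else s (j - 1)) + (\<gamma> + real j * \<beta> - real n * \<alpha>) * s j" for j
  show ?case
  proof (rule exI[of _ s'], intro conjI allI impI)
    fix j assume "j > Suc n" then show "s' j = 0" using s0 by (simp add: s'_def)
  next
    fix t
    have "gfact t \<alpha> (Suc n) = (\<Sum>j\<le>n. s j * gfact (t - \<gamma>) \<beta> j * (t - real n * \<alpha>))"
      by (simp add: gfact_Suc s sum_distrib_right)
    also have "\<dots> = (\<Sum>j\<le>n. s j * gfact (t - \<gamma>) \<beta> (Suc j)) + (\<Sum>j\<le>n. (\<gamma> + real j * \<beta> - real n * \<alpha>) * s j * gfact (t - \<gamma>) \<beta> j)"
      unfolding sum.distrib[symmetric] by (rule sum.cong) (simp_all add: gfact_Suc algebra_simps)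
    also have "(\<Sum>j\<le>n. s j * gfact (t - \<gamma>) \<beta> (Suc j)) = (\<Sum>j\<le>Suc n. (if j = 0 then 0 else s (j - 1)) * gfact (t - \<gamma>) \<beta> j)"
      by (subst sum.atMost_Suc_shift) simp
    also have "(\<Sum>j\<le>n. (\<gamma> + real j * \<beta> - real n * \<alpha>) * s j * gfact (t - \<gamma>) \<beta> j)
       = (\<Sum>j\<le>Suc n. (\<gamma> + real j * \<beta> - real n * \<alpha>) * s j * gfact (t - \<gamma>) \<beta> j)"
      using s0 by (simp add: sum.atMost_Suc)
    finally show "gfact t \<alpha> (Suc n) = (\<Sum>j\<le>Suc n. s' j * gfact (t - \<gamma>) \<beta> j)"
      by (simp add: s'_def sum.distrib distrib_right)
  qed
qed

fun bpoly :: "real \<Rightarrow> real \<Rightarrow> nat \<Rightarrow> real poly" where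
  "bpoly \<gamma> \<beta> 0 = 1"
| "bpoly \<gamma> \<beta> (Suc j) = bpoly \<gamma> \<beta> j * [:-(\<gamma> + real j * \<beta>), 1:]"

lemma bpoly_props: "degree (bpoly \<gamma> \<beta> j) = j \<and> coeff (bpoly \<gamma> \<beta> j) j = 1 \<and>
   (\<forall>t. poly (bpoly \<gamma> \<beta> j) t = gfact (t - \<gamma>) \<beta> j)"
proof (induction j)
  case 0 then show ?case by simp
next
  case (Suc j)
  then have nz: "bpoly \<gamma> \<beta> j \<noteq> 0" by auto
  have "degree (bpoly \<gamma> \<beta> j * [:-(\<gamma> + real j * \<beta>), 1:]) = degree (bpoly \<gamma> \<beta> j) + degree [:-(\<gamma> + real j * \<beta>), 1:]"
    using nz by (intro degree_mult_eq) auto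
  then have "degree (bpoly \<gamma> \<beta> (Suc j)) = Suc j"
    using Suc by (simp only: bpoly.simps) simp
  moreover have "coeff (bpoly \<gamma> \<beta> (Suc j)) (Suc j) = 1"
    using Suc coeff_mult_degree_sum[of "bpoly \<gamma> \<beta> j" "[:-(\<gamma> + real j * \<beta>), 1:]"]
    by (simp only: bpoly.simps) simp
  ultimately show ?case using Suc by (simp add: gfact_Suc algebra_simps)
qed

lemma gst_unique_aux:
  assumes "(\<Sum>j\<le>n. smult (s j) (bpoly \<gamma> \<beta> j)) = 0"
  shows "\<forall>j\<le>n. s j = 0"
  using assms
proof (induction n)
  case 0 then show ?case using bpoly_props[of \<gamma> \<beta> 0] by simp
next
  case (Suc n)
  have "coeff (\<Sum>j\<le>Suc n. smult (s j) (bpoly \<gamma> \<beta> j)) (Suc n) = s (Suc n)"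
  proof -
    have "coeff (bpoly \<gamma> \<beta> j) (Suc n) = 0" if "j \<le> n" for j
      using that bpoly_props[of \<gamma> \<beta> j] by (intro coeff_eq_0) auto
    then show ?thesis using bpoly_props[of \<gamma> \<beta> "Suc n"] by (simp del: bpoly.simps add: coeff_sum)
  qed
  then have sn: "s (Suc n) = 0" using Suc.prems by (metis coeff_0)
  then have "(\<Sum>j\<le>n. smult (s j) (bpoly \<gamma> \<beta> j)) = 0" using Suc.prems by (simp del: bpoly.simps)
  then show ?case using Suc.IH sn le_Suc_eq by auto
qed

lemma gst_unique:
  assumes "\<forall>t. (\<Sum>j\<le>n. s j * gfact (t - \<gamma>) \<beta> j) = (\<Sum>j\<le>n. r j * gfact (t - \<gamma>) \<beta> j)"
  shows "\<forall>j\<le>n. s j = r j"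
proof -
  have "\<forall>t. poly (\<Sum>j\<le>n. smult (s j - r j) (bpoly \<gamma> \<beta> j)) t = 0"
    using assms bpoly_props by (simp add: poly_sum algebra_simps sum_subtractf)
  then have "(\<Sum>j\<le>n. smult (s j - r j) (bpoly \<gamma> \<beta> j)) = 0" using poly_all_0_iff_0 by blast
  from gst_unique_aux[OF this] show ?thesis by simp
qed

lemma gst_char:
  assumes z: "\<forall>j>n. s j = 0" and e: "\<forall>t. gfact t \<alpha> n = (\<Sum>j\<le>n. s j * gfact (t - \<gamma>) \<beta> j)"
  shows "gstirling n k \<alpha> \<beta> \<gamma> = s k"
proof -
  have "(THE s :: nat \<Rightarrow> real. (\<forall>j>n. s j = 0) \<and>
        (\<forall>t. gfact t \<alpha> n = (\<Sum>j=0..n. s j * gfact (t - \<gamma>) \<beta> j))) = s"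
  proof (rule the_equality)
    show "(\<forall>j>n. s j = 0) \<and> (\<forall>t. gfact t \<alpha> n = (\<Sum>j=0..n. s j * gfact (t - \<gamma>) \<beta> j))"
      using z e by (simp add: atLeast0AtMost)
  next
    fix r :: "nat \<Rightarrow> real"
    assume r: "(\<forall>j>n. r j = 0) \<and> (\<forall>t. gfact t \<alpha> n = (\<Sum>j=0..n. r j * gfact (t - \<gamma>) \<beta> j))"
    have "\<forall>j\<le>n. r j = s j" by (rule gst_unique) (use e r in \<open>simp add: atLeast0AtMost\<close>)
    then show "r = s" using r z by (metis ext not_le)
  qed
  then show ?thesis unfolding gstirling_def by simp
qed

lemma gst_prop: "\<forall>t. gfact t \<alpha> n = (\<Sum>j\<le>n. gstirling n j \<alpha> \<beta> \<gamma> * gfact (t - \<gamma>) \<beta> j)"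
proof -
  obtain s where "(\<forall>j>n. s j = 0)" "\<forall>t. gfact t \<alpha> n = (\<Sum>j\<le>n. s j * gfact (t - \<gamma>) \<beta> j)"
    using gst_exists by blast
  with gst_char[OF this] show ?thesis by simp
qed

lemma sum_extend:
  fixes m n :: nat
  assumes "m \<le> n" "\<And>k. k > m \<Longrightarrow> f k = 0"
  shows "(\<Sum>k\<le>m. f k) = (\<Sum>k\<le>n. (f k :: real))"
proof (rule sum.mono_neutral_left)
  show "\<forall>i\<in>{..n} - {..m}. f i = 0"
  proof
    fix i assume "i \<in> {..n} - {..m}"
    then have "m < i" by auto
    then show "f i = 0" by (rule assms(2))
  qed
qed (use assms(1) in auto)

lemma inner_binom:
  fixes \<beta> x :: real
  assumes "m \<le> n"
  shows "(\<Sum>k\<le>n. gfact (\<beta> * real lam) (-\<beta>) k *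
            (real (m choose k) * gfact (\<beta> * real lam + real k * \<beta>) (-\<beta>) (m - k)) * x ^ k)
         = gfact (\<beta> * real lam) (-\<beta>) m * (x + 1) ^ m"
proof -
  have "(\<Sum>k\<le>n. gfact (\<beta> * real lam) (-\<beta>) k *
            (real (m choose k) * gfact (\<beta> * real lam + real k * \<beta>) (-\<beta>) (m - k)) * x ^ k)
      = (\<Sum>k\<le>m. gfact (\<beta> * real lam) (-\<beta>) k *
            (real (m choose k) * gfact (\<beta> * real lam + real k * \<beta>) (-\<beta>) (m - k)) * x ^ k)"
    by (rule sum_extend[symmetric]) (use assms in auto)
  also have "\<dots> = (\<Sum>k\<le>m. gfact (\<beta> * real lam) (-\<beta>) m * (real (m choose k) * x ^ k))"
  proof (rule sum.cong)
    fix k assume "k \<in> {..m}"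
    then have "gfact (\<beta> * real lam) (-\<beta>) m = gfact (\<beta> * real lam) (-\<beta>) (k + (m - k))" by simp
    also have "\<dots> = gfact (\<beta> * real lam) (-\<beta>) k * gfact (\<beta> * real lam + real k * \<beta>) (-\<beta>) (m - k)"
      by (simp add: gfact_add)
    finally show "gfact (\<beta> * real lam) (-\<beta>) k *
            (real (m choose k) * gfact (\<beta> * real lam + real k * \<beta>) (-\<beta>) (m - k)) * x ^ k
       = gfact (\<beta> * real lam) (-\<beta>) m * (real (m choose k) * x ^ k)" by simp
  qed simp
  also have "\<dots> = gfact (\<beta> * real lam) (-\<beta>) m * (x + 1) ^ m"
    by (simp add: binomial_ring sum_distrib_left)
  finally show ?thesis .
qed

theorem theorem11:
  fixes \<alpha> \<beta> \<gamma> x :: real and lam n :: nat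
  shows "Apoly lam x n \<alpha> \<beta> \<gamma> =
    (-1) ^ n * (\<Sum>k=0..n. negbin lam k * (-\<beta>) ^ k * fact k
        * gstirling n k \<alpha> \<beta> (\<beta> * real lam - \<gamma>) * (x + 1) ^ k)"
proof -
  define S2 where "S2 m = gstirling n m \<alpha> \<beta> (\<beta> * real lam - \<gamma>)" for m
  define D where "D m k = real (m choose k) * gfact (\<beta> * real lam + real k * \<beta>) (-\<beta>) (m - k)" for m k
  define s where "s k = (\<Sum>m\<le>n. (-1) ^ (m + k) * S2 m * D m k)" for k
  define P where "P k = gfact (\<beta> * real lam) (-\<beta>) k" for k
  have NP: "negbin lam k * \<beta> ^ k * fact k = P k" for k
    using poch_gfact[of \<beta> k lam] by (simp add: negbin_def P_def mult.commute)
  have stepA: "gfact t \<alpha> n = (\<Sum>k\<le>n. s k * gfact (t - - \<gamma>) (-\<beta>) k)" for t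
  proof -
    have "gfact t \<alpha> n = (\<Sum>m\<le>n. S2 m * gfact (t - (\<beta> * real lam - \<gamma>)) \<beta> m)"
      using gst_prop unfolding S2_def by blast
    also have "\<dots> = (\<Sum>m\<le>n. \<Sum>k\<le>n. (-1) ^ (m + k) * S2 m * D m k * gfact (t + \<gamma>) (-\<beta>) k)"
    proof (rule sum.cong[OF refl])
      fix m assume "m \<in> {..n}"
      then have mn: "m \<le> n" by simp
      have "gfact (t - (\<beta> * real lam - \<gamma>)) \<beta> m = (-1)^m * gfact (-(t + \<gamma>) + \<beta> * real lam) (-\<beta>) m"
        using gfact_neg[of "t - (\<beta> * real lam - \<gamma>)" \<beta> m] by (simp add: algebra_simps)
      also have "\<dots> = (-1)^m * (\<Sum>k\<le>m. D m k * ((-1)^k * gfact (t + \<gamma>) (-\<beta>) k))"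
        unfolding gfact_expand[of "-(t + \<gamma>)" "\<beta> * real lam" \<beta> m] gfact_neg2 D_def
        by (simp add: mult.assoc)
      also have "\<dots> = (-1)^m * (\<Sum>k\<le>n. D m k * ((-1)^k * gfact (t + \<gamma>) (-\<beta>) k))"
        by (subst sum_extend[OF mn]) (auto simp: D_def)
      finally show "S2 m * gfact (t - (\<beta> * real lam - \<gamma>)) \<beta> m =
          (\<Sum>k\<le>n. (-1) ^ (m + k) * S2 m * D m k * gfact (t + \<gamma>) (-\<beta>) k)"
        by (simp add: sum_distrib_left power_add algebra_simps)
    qed
    also have "\<dots> = (\<Sum>k\<le>n. \<Sum>m\<le>n. (-1) ^ (m + k) * S2 m * D m k * gfact (t + \<gamma>) (-\<beta>) k)"
      by (rule sum.swap)
    also have "\<dots> = (\<Sum>k\<le>n. s k * gfact (t - - \<gamma>) (-\<beta>) k)"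
      by (simp add: s_def sum_distrib_right)
    finally show ?thesis .
  qed
  have s0: "\<forall>k>n. s k = 0"
    by (auto simp: s_def D_def binomial_eq_0 intro!: sum.neutral)
  have stepB: "gstirling n k \<alpha> (-\<beta>) (-\<gamma>) = s k" for k
    by (rule gst_char) (use s0 stepA in auto)
  have "Apoly lam x n \<alpha> \<beta> \<gamma> = (\<Sum>k\<le>n. (-1) ^ (n + k) * P k * s k * x ^ k)"
    unfolding Apoly_def atLeast0AtMost stepB
    by (rule sum.cong) (simp_all add: NP[symmetric] algebra_simps)
  also have "\<dots> = (\<Sum>k\<le>n. \<Sum>m\<le>n. (-1) ^ n * ((-1) ^ m * S2 m) * (P k * D m k * x ^ k))"
    unfolding s_def sum_distrib_left sum_distrib_right
    by (intro sum.cong refl) (simp add: power_add algebra_simps)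
  also have "\<dots> = (\<Sum>m\<le>n. (-1) ^ n * ((-1) ^ m * S2 m) * (\<Sum>k\<le>n. P k * D m k * x ^ k))"
    by (subst sum.swap) (simp add: sum_distrib_left)
  also have "\<dots> = (\<Sum>m\<le>n. (-1) ^ n * ((-1) ^ m * S2 m) * (P m * (x + 1) ^ m))"
    by (intro sum.cong refl) (simp add: P_def D_def inner_binom)
  also have "\<dots> = (-1) ^ n * (\<Sum>k=0..n. negbin lam k * (-\<beta>) ^ k * fact k
        * gstirling n k \<alpha> \<beta> (\<beta> * real lam - \<gamma>) * (x + 1) ^ k)"
    unfolding atLeast0AtMost sum_distrib_left
  proof (intro sum.cong refl)
    fix m
    have e: "negbin lam m * (-\<beta>) ^ m * fact m = (-1) ^ m * P m"
    proof -
      have pm: "(-\<beta>) ^ m = (-1) ^ m * \<beta> ^ m" by (metis mult_minus1 power_mult_distrib)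
      show ?thesis unfolding NP[symmetric] pm by (simp only: mult_ac)
    qed
    show "(-1) ^ n * ((-1) ^ m * S2 m) * (P m * (x + 1) ^ m) =
      (-1) ^ n * (negbin lam m * (-\<beta>) ^ m * fact m * gstirling n m \<alpha> \<beta> (\<beta> * real lam - \<gamma>) * (x + 1) ^ m)"
      unfolding e S2_def by (simp add: mult_ac)
  qed
  finally show ?thesis .
qed

end
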